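(* In a search game (as defined in the context), for a mixed outcome $f:\Omega\to[0,1]$ the following are equivalent: (i) $f$ can be induced by a lottery over pure strategy profiles; (ii) $f$ is compatible; (iii) $f$ can be generated by a fractional allocation, i.e., $f=f_\alpha$ for some fractional allocation $\alpha$.
   Context: A search game has a finite set of players $N=\{1,\ldots,n\}$, a finite set $\Omega$ of locations, for each player $i$ a partition $\Pi_i$ of $\Omega$ (with $\pi_i(\omega)$ the cell containing $\omega$) and a capacity $K_i\in\mathbb{N}$ (other ingredients such as prior, costs and rewards are irrelevant here). A pure strategy $s_i$ assigns to each cell $\pi_i\in\Pi_i$ a subset $s_i(\pi_i)\subseteq\pi_i$ with at most $K_i$ elements; a pure profile is $s=(s_1,\ldots,s_n)$, and $m_s(\omega)=\sum_{i\in N}\mathbf{1}_{\omega\in s_i(\pi_i(\omega))}$. A mixed outcome is a function $f:\Omega\to[0,1]$. A lottery over pure profiles (a probability distribution $\sigma$ over the finite set of pure profiles) induces the mixed outcome $f(\omega)=\sigma(\{s: m_s(\omega)\ge1\})$. A mixed outcome $f$ is compatible if for every $W\subseteq\Omega$: $\sum_{\omega\in W}f(\omega)\le\sum_{i\in N}K_i\cdot|\{\pi_i\in\Pi_i:\pi_i\cap W\ne\emptyset\}|$. A fractional allocation $\alpha=(\alpha_1,\ldots,\alpha_n)$ specifies a number $\alpha_i(\pi_i,\omega)\ge0$ for every player $i$, cell $\pi_i\in\Pi_i$ and $\omega\in\pi_i$, such that $\sum_{\omega\in\pi_i}\alpha_i(\pi_i,\omega)\le K_i$ for every cell $\pi_i$;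 it generates the mixed outcome $f_\alpha(\omega)=\min\big(1,\sum_{i\in N}\alpha_i(\pi_i(\omega),\omega)\big)$. *)

theory Defs
  imports "HOL-Probability.Probability_Mass_Function" "HOL-Library.Disjoint_Sets"
begin

text \<open>Players have type 'i (player set N), locations have type 'w (location set \<Omega>).
  P i is the partition of player i, K i its capacity.\<close>

definition cell :: "('i \<Rightarrow> 'w set set) \<Rightarrow> 'i \<Rightarrow> 'w \<Rightarrow> 'w set" where
  "cell P i \<omega> = (THE c. c \<in> P i \<and> \<omega> \<in> c)"

text \<open>A pure strategy of player i: a subset of size at most K i of each cell
  (and, for canonicity, the empty set on non-cells).\<close>
definition pure_strategy :: "('i \<Rightarrow> 'w set set) \<Rightarrow> ('i \<Rightarrow> nat) \<Rightarrow> 'i \<Rightarrow> ('w set \<Rightarrow> 'w set) \<Rightarrow> bool" where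
  "pure_strategy P K i t \<longleftrightarrow>
     (\<forall>c\<in>P i. t c \<subseteq> c \<and> card (t c) \<le> K i) \<and> (\<forall>c. c \<notin> P i \<longrightarrow> t c = {})"

definition pure_profile :: "'i set \<Rightarrow> ('i \<Rightarrow> 'w set set) \<Rightarrow> ('i \<Rightarrow> nat) \<Rightarrow> ('i \<Rightarrow> 'w set \<Rightarrow> 'w set) \<Rightarrow> bool" where
  "pure_profile N P K s \<longleftrightarrow>
     (\<forall>i\<in>N. pure_strategy P K i (s i)) \<and> (\<forall>i. i \<notin> N \<longrightarrow> s i = (\<lambda>_. {}))"

definition searchers :: "'i set \<Rightarrow> ('i \<Rightarrow> 'w set set) \<Rightarrow> ('i \<Rightarrow> 'w set \<Rightarrow> 'w set) \<Rightarrow> 'w \<Rightarrow> nat" where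
  "searchers N P s \<omega> = (\<Sum>i\<in>N. if \<omega> \<in> s i (cell P i \<omega>) then 1 else 0)"

definition induced_by_lottery :: "'i set \<Rightarrow> 'w set \<Rightarrow> ('i \<Rightarrow> 'w set set) \<Rightarrow> ('i \<Rightarrow> nat) \<Rightarrow> ('w \<Rightarrow> real) \<Rightarrow> bool" where
  "induced_by_lottery N \<Omega> P K f \<longleftrightarrow>
     (\<exists>\<sigma> :: ('i \<Rightarrow> 'w set \<Rightarrow> 'w set) pmf.
        set_pmf \<sigma> \<subseteq> {s. pure_profile N P K s} \<and>
        (\<forall>\<omega>\<in>\<Omega>. f \<omega> = measure_pmf.prob \<sigma> {s. searchers N P s \<omega> \<ge> 1}))"

definition compatible :: "'i set \<Rightarrow> 'w set \<Rightarrow> ('i \<Rightarrow> 'w set set) \<Rightarrow> ('i \<Rightarrow> nat) \<Rightarrow> ('w \<Rightarrow> real) \<Rightarrow> bool" where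
  "compatible N \<Omega> P K f \<longleftrightarrow>
     (\<forall>W\<subseteq>\<Omega>. (\<Sum>\<omega>\<in>W. f \<omega>) \<le> (\<Sum>i\<in>N. real (K i) * real (card {c\<in>P i. c \<inter> W \<noteq> {}})))"

definition fractional_allocation :: "'i set \<Rightarrow> ('i \<Rightarrow> 'w set set) \<Rightarrow> ('i \<Rightarrow> nat) \<Rightarrow> ('i \<Rightarrow> 'w set \<Rightarrow> 'w \<Rightarrow> real) \<Rightarrow> bool" where
  "fractional_allocation N P K \<alpha> \<longleftrightarrow>
     (\<forall>i\<in>N. \<forall>c\<in>P i. (\<forall>\<omega>\<in>c. \<alpha> i c \<omega> \<ge> 0) \<and> (\<Sum>\<omega>\<in>c. \<alpha> i c \<omega>) \<le> real (K i))"

definition generated_outcome :: "'i set \<Rightarrow> ('i \<Rightarrow> 'w set set) \<Rightarrow> ('i \<Rightarrow> 'w set \<Rightarrow> 'w \<Rightarrow> real) \<Rightarrow> 'w \<Rightarrow> real" where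
  "generated_outcome N P \<alpha> \<omega> = min 1 (\<Sum>i\<in>N. \<alpha> i (cell P i \<omega>) \<omega>)"

end

theory Submission imports Defs begin

definition capc :: "'a set \<Rightarrow> ('a \<Rightarrow> 'w set) \<Rightarrow> ('a \<Rightarrow> nat) \<Rightarrow> 'w set \<Rightarrow> real" where
  "capc A D \<kappa> W = (\<Sum>a\<in>A. if D a \<inter> W \<noteq> {} then real (\<kappa> a) else 0)"

definition compc :: "'a set \<Rightarrow> 'w set \<Rightarrow> ('a \<Rightarrow> 'w set) \<Rightarrow> ('a \<Rightarrow> nat) \<Rightarrow> ('w \<Rightarrow> real) \<Rightarrow> bool" where
  "compc A \<Omega> D \<kappa> f \<longleftrightarrow> (\<forall>W\<subseteq>\<Omega>. sum f W \<le> capc A D \<kappa> W)"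

definition coverable :: "'a set \<Rightarrow> ('a \<Rightarrow> 'w set) \<Rightarrow> ('a \<Rightarrow> nat) \<Rightarrow> 'w set \<Rightarrow> bool" where
  "coverable A D \<kappa> S \<longleftrightarrow> (\<exists>x. (\<forall>a\<in>A. x a \<subseteq> D a \<and> card (x a) \<le> \<kappa> a) \<and> S \<subseteq> (\<Union>a\<in>A. x a))"

definition lott :: "'a set \<Rightarrow> 'w set \<Rightarrow> ('a \<Rightarrow> 'w set) \<Rightarrow> ('a \<Rightarrow> nat) \<Rightarrow> ('w \<Rightarrow> real) \<Rightarrow> bool" where
  "lott A \<Omega> D \<kappa> f \<longleftrightarrow> (\<exists>\<tau> :: 'w set pmf. (\<forall>S\<in>set_pmf \<tau>. coverable A D \<kappa> S \<and> S \<subseteq> \<Omega>)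
      \<and> (\<forall>\<omega>\<in>\<Omega>. f \<omega> = measure_pmf.prob \<tau> {S. \<omega> \<in> S}))"

lemma lott_empty: "lott A {} D \<kappa> f"
proof -
  have "coverable A D \<kappa> {}" unfolding coverable_def by (rule exI[of _ "\<lambda>_. {}"]) simp
  then show ?thesis unfolding lott_def by (intro exI[of _ "return_pmf {}"]) simp
qed

lemma coverable_mono:
  assumes "coverable A D \<kappa> S" "\<And>a. a \<in> A \<Longrightarrow> D a \<subseteq> D' a" "\<And>a. a \<in> A \<Longrightarrow> \<kappa> a \<le> \<kappa>' a"
  shows "coverable A D' \<kappa>' S"
proof -
  obtain x where x1: "\<forall>a\<in>A. x a \<subseteq> D a \<and> card (x a) \<le> \<kappa> a" and x2: "S \<subseteq> (\<Union>a\<in>A. x a)"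
    using assms(1) unfolding coverable_def by (elim exE conjE)
  have "\<forall>a\<in>A. x a \<subseteq> D' a \<and> card (x a) \<le> \<kappa>' a"
  proof
    fix a assume "a \<in> A"
    then show "x a \<subseteq> D' a \<and> card (x a) \<le> \<kappa>' a" using x1 assms(2,3)[of a] by (meson order_trans)
  qed
  then show ?thesis unfolding coverable_def using x2 by (intro exI[of _ x]) (simp only: simp_thms)
qed

lemma lott_zero:
  assumes "\<omega> \<in> \<Omega>" "f \<omega> = 0" "lott A (\<Omega> - {\<omega>}) (\<lambda>a. D a - {\<omega>}) \<kappa> f"
  shows "lott A \<Omega> D \<kappa> f"
proof -
  obtain \<tau> where t1: "\<forall>S\<in>set_pmf \<tau>. coverable A (\<lambda>a. D a - {\<omega>}) \<kappa> S \<and> S \<subseteq> \<Omega> - {\<omega>}"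
    and t2: "\<forall>\<omega>'\<in>\<Omega> - {\<omega>}. f \<omega>' = measure_pmf.prob \<tau> {S. \<omega>' \<in> S}"
    using assms(3) unfolding lott_def by (elim exE conjE)
  have p0: "measure_pmf.prob \<tau> {S. \<omega> \<in> S} = 0"
  proof -
    have "set_pmf \<tau> \<inter> {S. \<omega> \<in> S} = {}" using t1 by auto
    then show ?thesis by (simp add: measure_pmf_zero_iff)
  qed
  show ?thesis unfolding lott_def
  proof (intro exI[of _ \<tau>] conjI)
    show "\<forall>S\<in>set_pmf \<tau>. coverable A D \<kappa> S \<and> S \<subseteq> \<Omega>"
    proof
      fix S assume S: "S \<in> set_pmf \<tau>"
      then have "coverable A (\<lambda>a. D a - {\<omega>}) \<kappa> S" "S \<subseteq> \<Omega> - {\<omega>}" using t1 by auto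
      then show "coverable A D \<kappa> S \<and> S \<subseteq> \<Omega>"
        using coverable_mono[of A "\<lambda>a. D a - {\<omega>}" \<kappa> S D \<kappa>] by auto
    qed
  next
    show "\<forall>w\<in>\<Omega>. f w = measure_pmf.prob \<tau> {S. w \<in> S}"
    proof
    fix w assume "w \<in> \<Omega>"
    then show "f w = measure_pmf.prob \<tau> {S. w \<in> S}" using t2 assms(2) p0 by (cases "w = \<omega>") auto
    qed
  qed
qed

lemma lott_assign:
  assumes "\<omega> \<in> \<Omega>" "a0 \<in> A" "\<omega> \<in> D a0" "1 \<le> \<kappa> a0" "f \<omega> = 1" "finite \<Omega>" "\<forall>a\<in>A. D a \<subseteq> \<Omega>"
    "lott A (\<Omega> - {\<omega>}) (\<lambda>a. D a - {\<omega>}) (\<kappa>(a0 := \<kappa> a0 - 1)) f"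
  shows "lott A \<Omega> D \<kappa> f"
proof -
  obtain \<tau> where t1: "\<forall>S\<in>set_pmf \<tau>. coverable A (\<lambda>a. D a - {\<omega>}) (\<kappa>(a0 := \<kappa> a0 - 1)) S \<and> S \<subseteq> \<Omega> - {\<omega>}"
    and t2: "\<forall>\<omega>'\<in>\<Omega> - {\<omega>}. f \<omega>' = measure_pmf.prob \<tau> {S. \<omega>' \<in> S}"
    using assms(8) unfolding lott_def by (elim exE conjE)
  have cov: "coverable A D \<kappa> (insert \<omega> S)" if cv: "coverable A (\<lambda>a. D a - {\<omega>}) (\<kappa>(a0 := \<kappa> a0 - 1)) S" for S
  proof -
    obtain x where x1: "\<forall>a\<in>A. x a \<subseteq> D a - {\<omega>} \<and> card (x a) \<le> (\<kappa>(a0 := \<kappa> a0 - 1)) a"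
      and x2: "S \<subseteq> (\<Union>a\<in>A. x a)" using cv unfolding coverable_def by (elim exE conjE)
    define y where "y = x(a0 := insert \<omega> (x a0))"
    have "\<forall>a\<in>A. y a \<subseteq> D a \<and> card (y a) \<le> \<kappa> a"
    proof
      fix a assume "a \<in> A"
      show "y a \<subseteq> D a \<and> card (y a) \<le> \<kappa> a"
      proof (cases "a = a0")
        case True
        have "x a0 \<subseteq> \<Omega>" using x1 assms(2,7) by blast
        then have "finite (x a0)" using assms(6) by (rule finite_subset)
        then have "card (y a) \<le> card (x a0) + 1" using True by (simp add: y_def card_insert_if)
        moreover have "card (x a0) \<le> \<kappa> a0 - 1" "x a0 \<subseteq> D a0" using x1 assms(2) by auto
        ultimately show ?thesis using assms(3,4) True by (auto simp: y_def)
      next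
        case False
        then show ?thesis using x1 \<open>a \<in> A\<close> by (auto simp: y_def)
      qed
    qed
    moreover have "insert \<omega> S \<subseteq> (\<Union>a\<in>A. y a)" using x2 assms(2) by (auto simp: y_def)
    ultimately show ?thesis unfolding coverable_def by (intro exI[of _ y]) (simp only: simp_thms)
  qed
  show ?thesis unfolding lott_def
  proof (intro exI[of _ "map_pmf (insert \<omega>) \<tau>"] conjI)
    show "\<forall>S\<in>set_pmf (map_pmf (insert \<omega>) \<tau>). coverable A D \<kappa> S \<and> S \<subseteq> \<Omega>"
    proof
      fix S assume "S \<in> set_pmf (map_pmf (insert \<omega>) \<tau>)"
      then obtain S' where "S' \<in> set_pmf \<tau>" "S = insert \<omega> S'" by auto
      then show "coverable A D \<kappa> S \<and> S \<subseteq> \<Omega>" using t1 cov assms(1) by auto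
    qed
  next
    show "\<forall>w\<in>\<Omega>. f w = measure_pmf.prob (map_pmf (insert \<omega>) \<tau>) {S. w \<in> S}"
    proof
      fix \<omega>' assume "\<omega>' \<in> \<Omega>"
      show "f \<omega>' = measure_pmf.prob (map_pmf (insert \<omega>) \<tau>) {S. \<omega>' \<in> S}"
      proof (cases "\<omega>' = \<omega>")
        case True
        then show ?thesis using assms(5) by simp
      next
        case False
        have "insert \<omega> -` {S. \<omega>' \<in> S} = {S. \<omega>' \<in> S}" using False by auto
        then show ?thesis using t2 False \<open>\<omega>' \<in> \<Omega>\<close> by simp
      qed
    qed
  qed
qed

lemma measure_pmf_cong_support:
  assumes "\<And>x. x \<in> set_pmf p \<Longrightarrow> x \<in> X \<longleftrightarrow> x \<in> Y"
  shows "measure_pmf.prob p X = measure_pmf.prob p Y"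
proof -
  have "X \<inter> set_pmf p = Y \<inter> set_pmf p" using assms by blast
  then show ?thesis by (metis measure_Int_set_pmf)
qed

lemma measure_bind_bernoulli:
  assumes "0 \<le> l" "l \<le> 1"
  shows "measure_pmf.prob (bind_pmf (bernoulli_pmf l) (\<lambda>b. if b then p else q)) X
     = l * measure_pmf.prob p X + (1 - l) * measure_pmf.prob q X"
proof -
  let ?a = "measure_pmf.prob p X" and ?b = "measure_pmf.prob q X"
  have "emeasure (measure_pmf (bind_pmf (bernoulli_pmf l) (\<lambda>b. if b then p else q))) X
      = emeasure (measure_pmf p) X * ennreal l + emeasure (measure_pmf q) X * ennreal (1 - l)"
    using assms by simp
  also have "\<dots> = ennreal ?a * ennreal l + ennreal ?b * ennreal (1 - l)"
    by (simp only: measure_pmf.emeasure_eq_measure)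
  also have "ennreal ?a * ennreal l = ennreal (?a * l)"
    by (rule ennreal_mult[symmetric]) (auto simp: assms)
  also have "ennreal ?b * ennreal (1 - l) = ennreal (?b * (1 - l))"
    by (rule ennreal_mult[symmetric]) (auto simp: assms)
  also have "ennreal (?a * l) + ennreal (?b * (1 - l)) = ennreal (?a * l + ?b * (1 - l))"
    by (rule ennreal_plus[symmetric]) (auto simp: assms)
  finally have "ennreal (measure_pmf.prob (bind_pmf (bernoulli_pmf l) (\<lambda>b. if b then p else q)) X)
      = ennreal (?a * l + ?b * (1 - l))"
    by (simp only: measure_pmf.emeasure_eq_measure)
  then have "measure_pmf.prob (bind_pmf (bernoulli_pmf l) (\<lambda>b. if b then p else q)) X = ?a * l + ?b * (1 - l)"
    by (rule ennreal_inj[THEN iffD1, rotated 2]) (auto simp: assms)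
  then show ?thesis by (simp add: mult.commute)
qed

lemma lott_mix:
  assumes "lott A \<Omega> D \<kappa> f" "lott A \<Omega> D \<kappa> g" "0 \<le> l" "l \<le> 1"
  shows "lott A \<Omega> D \<kappa> (\<lambda>w. l * f w + (1 - l) * g w)"
proof -
  obtain p where p1: "\<forall>S\<in>set_pmf p. coverable A D \<kappa> S \<and> S \<subseteq> \<Omega>"
    and p2: "\<forall>w\<in>\<Omega>. f w = measure_pmf.prob p {S. w \<in> S}"
    using assms(1) unfolding lott_def by (elim exE conjE)
  obtain q where q1: "\<forall>S\<in>set_pmf q. coverable A D \<kappa> S \<and> S \<subseteq> \<Omega>"
    and q2: "\<forall>w\<in>\<Omega>. g w = measure_pmf.prob q {S. w \<in> S}"
    using assms(2) unfolding lott_def by (elim exE conjE)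
  define r where "r = bind_pmf (bernoulli_pmf l) (\<lambda>b. if b then p else q)"
  have "set_pmf r \<subseteq> set_pmf p \<union> set_pmf q" unfolding r_def by (auto simp: set_bind_pmf split: if_splits)
  then have r1: "\<forall>S\<in>set_pmf r. coverable A D \<kappa> S \<and> S \<subseteq> \<Omega>" using p1 q1 by blast
  have r2: "\<forall>w\<in>\<Omega>. l * f w + (1 - l) * g w = measure_pmf.prob r {S. w \<in> S}"
  proof
    fix w assume w: "w \<in> \<Omega>"
    show "l * f w + (1 - l) * g w = measure_pmf.prob r {S. w \<in> S}"
      unfolding r_def measure_bind_bernoulli[OF assms(3,4)] using p2 q2 w by simp
  qed
  show ?thesis unfolding lott_def using r1 r2 by (intro exI[of _ r]) (simp only: simp_thms)
qed

lemma lott_split: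
  assumes "W \<subseteq> \<Omega>" "\<forall>a\<in>A. D a \<subseteq> \<Omega>" "lott A W (\<lambda>a. D a \<inter> W) \<kappa> f"
    "lott A (\<Omega> - W) (\<lambda>a. if D a \<inter> W = {} then D a else {}) \<kappa> f"
  shows "lott A \<Omega> D \<kappa> f"
proof -
  obtain p where p1: "\<forall>S\<in>set_pmf p. coverable A (\<lambda>a. D a \<inter> W) \<kappa> S \<and> S \<subseteq> W"
    and p2: "\<forall>w\<in>W. f w = measure_pmf.prob p {S. w \<in> S}"
    using assms(3) unfolding lott_def by (elim exE conjE)
  obtain q where q1: "\<forall>S\<in>set_pmf q. coverable A (\<lambda>a. if D a \<inter> W = {} then D a else {}) \<kappa> S \<and> S \<subseteq> \<Omega> - W"
    and q2: "\<forall>w\<in>\<Omega> - W. f w = measure_pmf.prob q {S. w \<in> S}"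
    using assms(4) unfolding lott_def by (elim exE conjE)
  define r where "r = map_pmf (\<lambda>(S1, S2). S1 \<union> S2) (pair_pmf p q)"
  have cov: "coverable A D \<kappa> (S1 \<union> S2)" if S12: "S1 \<in> set_pmf p" "S2 \<in> set_pmf q" for S1 S2
  proof -
    obtain x1 where x11: "\<forall>a\<in>A. x1 a \<subseteq> D a \<inter> W \<and> card (x1 a) \<le> \<kappa> a"
      and x12: "S1 \<subseteq> (\<Union>a\<in>A. x1 a)" using bspec[OF p1 S12(1)] unfolding coverable_def by (elim exE conjE)
    obtain x2 where x21: "\<forall>a\<in>A. x2 a \<subseteq> (if D a \<inter> W = {} then D a else {}) \<and> card (x2 a) \<le> \<kappa> a"
      and x22: "S2 \<subseteq> (\<Union>a\<in>A. x2 a)" using bspec[OF q1 S12(2)] unfolding coverable_def by (elim exE conjE)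
    define y where "y = (\<lambda>a. x1 a \<union> x2 a)"
    have "\<forall>a\<in>A. y a \<subseteq> D a \<and> card (y a) \<le> \<kappa> a"
    proof
      fix a assume a: "a \<in> A"
      show "y a \<subseteq> D a \<and> card (y a) \<le> \<kappa> a"
      proof (cases "D a \<inter> W = {}")
        case True
        then have "x1 a = {}" using x11 a by blast
        moreover have "x2 a \<subseteq> D a" "card (x2 a) \<le> \<kappa> a" using bspec[OF x21 a] True by auto
        ultimately show ?thesis by (simp add: y_def)
      next
        case False
        then have "x2 a \<subseteq> {}" using bspec[OF x21 a] by simp
        then have "x2 a = {}" by blast
        then show ?thesis using x11 a by (auto simp: y_def)
      qed
    qed
    moreover have "S1 \<union> S2 \<subseteq> (\<Union>a\<in>A. y a)" using x12 x22 by (auto simp: y_def)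
    ultimately show ?thesis unfolding coverable_def by (intro exI[of _ y]) (simp only: simp_thms)
  qed
  have r1: "\<forall>S\<in>set_pmf r. coverable A D \<kappa> S \<and> S \<subseteq> \<Omega>"
  proof
    fix S assume "S \<in> set_pmf r"
    then obtain S1 S2 where "S1 \<in> set_pmf p" "S2 \<in> set_pmf q" "S = S1 \<union> S2"
      unfolding r_def by (auto simp: set_pair_pmf)
    then show "coverable A D \<kappa> S \<and> S \<subseteq> \<Omega>" using cov p1 q1 assms(1) by blast
  qed
  have r2: "\<forall>w\<in>\<Omega>. f w = measure_pmf.prob r {S. w \<in> S}"
  proof
    fix w assume w: "w \<in> \<Omega>"
    have e: "measure_pmf.prob r {S. w \<in> S} = measure_pmf.prob (pair_pmf p q) {z. w \<in> fst z \<union> snd z}"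
      unfolding r_def by (simp add: case_prod_beta vimage_def)
    show "f w = measure_pmf.prob r {S. w \<in> S}"
    proof (cases "w \<in> W")
      case True
      have "measure_pmf.prob (pair_pmf p q) {z. w \<in> fst z \<union> snd z}
          = measure_pmf.prob (pair_pmf p q) (fst -` {S. w \<in> S})"
        by (rule measure_pmf_cong_support) (use q1 True in \<open>auto simp: set_pair_pmf\<close>)
      also have "\<dots> = measure_pmf.prob p {S. w \<in> S}"
        by (metis measure_map_pmf map_fst_pair_pmf)
      finally show ?thesis using e p2 True by simp
    next
      case False
      have "measure_pmf.prob (pair_pmf p q) {z. w \<in> fst z \<union> snd z}
          = measure_pmf.prob (pair_pmf p q) (snd -` {S. w \<in> S})"
        by (rule measure_pmf_cong_support) (use p1 False in \<open>auto simp: set_pair_pmf\<close>)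
      also have "\<dots> = measure_pmf.prob q {S. w \<in> S}"
        by (metis measure_map_pmf map_snd_pair_pmf)
      finally show ?thesis using e q2 False w by simp
    qed
  qed
  show ?thesis unfolding lott_def using r1 r2 by (intro exI[of _ r]) (simp only: simp_thms)
qed

definition fracs :: "'w set \<Rightarrow> ('w \<Rightarrow> real) \<Rightarrow> 'w set" where
  "fracs \<Omega> f = {\<omega>\<in>\<Omega>. 0 < f \<omega> \<and> f \<omega> < 1}"

definition nontight :: "'a set \<Rightarrow> 'w set \<Rightarrow> ('a \<Rightarrow> 'w set) \<Rightarrow> ('a \<Rightarrow> nat) \<Rightarrow> ('w \<Rightarrow> real) \<Rightarrow> 'w set set" where
  "nontight A \<Omega> D \<kappa> f = {W. W \<subseteq> \<Omega> \<and> sum f W < capc A D \<kappa> W}"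

lemma move:
  assumes fin: "finite \<Omega>" and rng: "\<forall>\<omega>\<in>\<Omega>. 0 \<le> f \<omega> \<and> f \<omega> \<le> 1" and cmp: "compc A \<Omega> D \<kappa> f"
    and dnz: "\<exists>\<omega>\<in>\<Omega>. d \<omega> \<noteq> 0" and dfr: "\<forall>\<omega>\<in>\<Omega>. d \<omega> \<noteq> 0 \<longrightarrow> 0 < f \<omega> \<and> f \<omega> < 1"
    and dt: "\<forall>W. W \<subseteq> \<Omega> \<longrightarrow> sum f W = capc A D \<kappa> W \<longrightarrow> sum d W = 0"
  shows "\<exists>t>0. (\<forall>\<omega>\<in>\<Omega>. 0 \<le> f \<omega> + t * d \<omega> \<and> f \<omega> + t * d \<omega> \<le> 1)
     \<and> compc A \<Omega> D \<kappa> (\<lambda>\<omega>. f \<omega> + t * d \<omega>)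
     \<and> fracs \<Omega> (\<lambda>\<omega>. f \<omega> + t * d \<omega>) \<subseteq> fracs \<Omega> f
     \<and> nontight A \<Omega> D \<kappa> (\<lambda>\<omega>. f \<omega> + t * d \<omega>) \<subseteq> nontight A \<Omega> D \<kappa> f
     \<and> (fracs \<Omega> (\<lambda>\<omega>. f \<omega> + t * d \<omega>) \<noteq> fracs \<Omega> f \<or> nontight A \<Omega> D \<kappa> (\<lambda>\<omega>. f \<omega> + t * d \<omega>) \<noteq> nontight A \<Omega> D \<kappa> f)"
proof -
  define T1 where "T1 = (\<lambda>\<omega>. (1 - f \<omega>) / d \<omega>) ` {\<omega>\<in>\<Omega>. d \<omega> > 0}"
  define T2 where "T2 = (\<lambda>\<omega>. f \<omega> / (- d \<omega>)) ` {\<omega>\<in>\<Omega>. d \<omega> < 0}"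
  define T3 where "T3 = (\<lambda>W. (capc A D \<kappa> W - sum f W) / sum d W) ` {W. W \<subseteq> \<Omega> \<and> sum d W > 0}"
  define T where "T = T1 \<union> T2 \<union> T3"
  have finT: "finite T" unfolding T_def T1_def T2_def T3_def using fin by auto
  have neT: "T \<noteq> {}"
  proof -
    obtain \<omega> where "\<omega> \<in> \<Omega>" "d \<omega> \<noteq> 0" using dnz by blast
    then consider "d \<omega> > 0" | "d \<omega> < 0" by linarith
    then show ?thesis
    proof cases
      case 1
      then have "(1 - f \<omega>) / d \<omega> \<in> T1" unfolding T1_def using \<open>\<omega> \<in> \<Omega>\<close> by (intro imageI) simp
      then show ?thesis unfolding T_def by blast
    next
      case 2
      then have "f \<omega> / (- d \<omega>) \<in> T2" unfolding T2_def using \<open>\<omega> \<in> \<Omega>\<close> by (intro imageI) simp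
      then show ?thesis unfolding T_def by blast
    qed
  qed
  have W3: "sum f W < capc A D \<kappa> W" if "W \<subseteq> \<Omega>" "sum d W > 0" for W
  proof -
    have "sum f W \<le> capc A D \<kappa> W" using cmp that(1) unfolding compc_def by blast
    moreover have "sum f W \<noteq> capc A D \<kappa> W" using dt that by force
    ultimately show ?thesis by linarith
  qed
  have posT: "x > 0" if xT: "x \<in> T" for x
  proof -
    consider "x \<in> T1" | "x \<in> T2" | "x \<in> T3" using xT unfolding T_def by blast
    then show ?thesis
    proof cases
      case 1
      then obtain \<omega> where w: "\<omega> \<in> \<Omega>" "d \<omega> > 0" "x = (1 - f \<omega>) / d \<omega>" unfolding T1_def by auto
      then have "f \<omega> < 1" using dfr by auto
      then show ?thesis using w by simp
    next
      case 2
      then obtain \<omega> where w: "\<omega> \<in> \<Omega>" "d \<omega> < 0" "x = f \<omega> / (- d \<omega>)" unfolding T2_def by auto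
      then have "f \<omega> > 0" using dfr by auto
      moreover have "- d \<omega> > 0" using w by simp
      ultimately have "f \<omega> / (- d \<omega>) > 0" by (rule divide_pos_pos)
      then show ?thesis using w(3) by simp
    next
      case 3
      then obtain W where W: "W \<subseteq> \<Omega>" "sum d W > 0" "x = (capc A D \<kappa> W - sum f W) / sum d W"
        unfolding T3_def by auto
      then show ?thesis using W3[OF W(1,2)] by simp
    qed
  qed
  define t where "t = Min T"
  have tT: "t \<in> T" unfolding t_def using finT neT by (rule Min_in)
  have tle: "t \<le> x" if "x \<in> T" for x unfolding t_def using finT that by (rule Min_le)
  have tpos: "t > 0" using posT tT by blast
  define g where "g = (\<lambda>\<omega>. f \<omega> + t * d \<omega>)"
  have rng_g: "\<forall>\<omega>\<in>\<Omega>. 0 \<le> g \<omega> \<and> g \<omega> \<le> 1"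
  proof
    fix \<omega> assume w: "\<omega> \<in> \<Omega>"
    consider "d \<omega> > 0" | "d \<omega> < 0" | "d \<omega> = 0" by linarith
    then show "0 \<le> g \<omega> \<and> g \<omega> \<le> 1"
    proof cases
      case 1
      then have "t \<le> (1 - f \<omega>) / d \<omega>" using w by (intro tle) (auto simp: T_def T1_def)
      then have "t * d \<omega> \<le> 1 - f \<omega>" using 1 by (simp add: pos_le_divide_eq)
      moreover have "0 \<le> t * d \<omega>" using 1 tpos by simp
      ultimately show ?thesis using rng w by (auto simp: g_def)
    next
      case 2
      then have "t \<le> f \<omega> / (- d \<omega>)" using w by (intro tle) (auto simp: T_def T2_def)
      moreover have dpos: "0 < - d \<omega>" using 2 by simp
      ultimately have "t * (- d \<omega>) \<le> f \<omega>" by (simp only: pos_le_divide_eq[OF dpos])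
      moreover have "t * d \<omega> \<le> 0" using 2 tpos by (simp add: mult_nonneg_nonpos)
      ultimately show ?thesis using rng w by (auto simp: g_def)
    qed (use rng w in \<open>auto simp: g_def\<close>)
  qed
  have sg: "sum g W = sum f W + t * sum d W" for W
    by (simp add: g_def sum.distrib sum_distrib_left)
  have cmp_g: "compc A \<Omega> D \<kappa> g"
    unfolding compc_def
  proof (intro allI impI)
    fix W assume W: "W \<subseteq> \<Omega>"
    show "sum g W \<le> capc A D \<kappa> W"
    proof (cases "sum d W > 0")
      case True
      then have "t \<le> (capc A D \<kappa> W - sum f W) / sum d W" using W by (intro tle) (auto simp: T_def T3_def)
      then have "t * sum d W \<le> capc A D \<kappa> W - sum f W" using True by (simp add: pos_le_divide_eq)
      then show ?thesis by (simp add: sg)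
    next
      case False
      then have "t * sum d W \<le> 0" using tpos by (simp add: mult_nonneg_nonpos)
      moreover have "sum f W \<le> capc A D \<kappa> W" using cmp W unfolding compc_def by blast
      ultimately show ?thesis by (simp add: sg)
    qed
  qed
  have fr: "fracs \<Omega> g \<subseteq> fracs \<Omega> f"
  proof
    fix \<omega> assume "\<omega> \<in> fracs \<Omega> g"
    then show "\<omega> \<in> fracs \<Omega> f" using dfr unfolding fracs_def g_def by (cases "d \<omega> = 0") auto
  qed
  have nt: "nontight A \<Omega> D \<kappa> g \<subseteq> nontight A \<Omega> D \<kappa> f"
  proof
    fix W assume "W \<in> nontight A \<Omega> D \<kappa> g"
    then have W: "W \<subseteq> \<Omega>" "sum g W < capc A D \<kappa> W" unfolding nontight_def by auto
    have le: "sum f W \<le> capc A D \<kappa> W" using cmp W(1) unfolding compc_def by blast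
    have "sum f W \<noteq> capc A D \<kappa> W"
    proof
      assume "sum f W = capc A D \<kappa> W"
      then have "sum d W = 0" using dt W(1) by blast
      then show False using W(2) \<open>sum f W = capc A D \<kappa> W\<close> by (simp add: sg)
    qed
    then show "W \<in> nontight A \<Omega> D \<kappa> f" using W(1) le unfolding nontight_def by auto
  qed
  have strict: "fracs \<Omega> g \<noteq> fracs \<Omega> f \<or> nontight A \<Omega> D \<kappa> g \<noteq> nontight A \<Omega> D \<kappa> f"
  proof -
    consider "t \<in> T1" | "t \<in> T2" | "t \<in> T3" using tT unfolding T_def by blast
    then show ?thesis
    proof cases
      case 1
      then obtain \<omega> where w: "\<omega> \<in> \<Omega>" "d \<omega> > 0" "t = (1 - f \<omega>) / d \<omega>" unfolding T1_def by auto
      then have "g \<omega> = 1" by (simp add: g_def)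
      moreover have "\<omega> \<in> fracs \<Omega> f" using w dfr unfolding fracs_def by auto
      ultimately have "\<omega> \<notin> fracs \<Omega> g" "\<omega> \<in> fracs \<Omega> f" unfolding fracs_def by auto
      then show ?thesis by blast
    next
      case 2
      then obtain \<omega> where w: "\<omega> \<in> \<Omega>" "d \<omega> < 0" "t = f \<omega> / (- d \<omega>)" unfolding T2_def by auto
      then have "g \<omega> = 0" by (simp add: g_def)
      moreover have "\<omega> \<in> fracs \<Omega> f" using w dfr unfolding fracs_def by auto
      ultimately have "\<omega> \<notin> fracs \<Omega> g" "\<omega> \<in> fracs \<Omega> f" unfolding fracs_def by auto
      then show ?thesis by blast
    next
      case 3
      then obtain W where W: "W \<subseteq> \<Omega>" "sum d W > 0" "t = (capc A D \<kappa> W - sum f W) / sum d W"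
        unfolding T3_def by auto
      then have "sum g W = capc A D \<kappa> W" by (simp add: sg)
      then have "W \<notin> nontight A \<Omega> D \<kappa> g" unfolding nontight_def by auto
      moreover have "W \<in> nontight A \<Omega> D \<kappa> f" using W W3 unfolding nontight_def by auto
      ultimately show ?thesis by blast
    qed
  qed
  show ?thesis using tpos rng_g cmp_g fr nt strict unfolding g_def by blast
qed

lemma lex_dec:
  assumes fin: "finite \<Omega>" and a: "fracs \<Omega> g \<subseteq> fracs \<Omega> f" and b: "nontight A \<Omega> D \<kappa> g \<subseteq> nontight A \<Omega> D \<kappa> f"
    and c: "fracs \<Omega> g \<noteq> fracs \<Omega> f \<or> nontight A \<Omega> D \<kappa> g \<noteq> nontight A \<Omega> D \<kappa> f"
  shows "card (fracs \<Omega> g) < card (fracs \<Omega> f) \<or>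
    (card (fracs \<Omega> g) = card (fracs \<Omega> f) \<and> card (nontight A \<Omega> D \<kappa> g) < card (nontight A \<Omega> D \<kappa> f))"
proof -
  have f1: "finite (fracs \<Omega> f)" using fin unfolding fracs_def by simp
  have "nontight A \<Omega> D \<kappa> f \<subseteq> Pow \<Omega>" unfolding nontight_def by auto
  then have f2: "finite (nontight A \<Omega> D \<kappa> f)" using fin by (meson finite_Pow_iff finite_subset)
  show ?thesis
  proof (cases "fracs \<Omega> g = fracs \<Omega> f")
    case True
    then have "nontight A \<Omega> D \<kappa> g \<subset> nontight A \<Omega> D \<kappa> f" using b c by blast
    then show ?thesis using True f2 by (simp add: psubset_card_mono)
  next
    case False
    then have "fracs \<Omega> g \<subset> fracs \<Omega> f" using a by blast
    then show ?thesis using f1 by (simp add: psubset_card_mono)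
  qed
qed

lemma lott_move:
  fixes d :: "'w \<Rightarrow> real"
  assumes fin: "finite \<Omega>" and rng: "\<forall>\<omega>\<in>\<Omega>. 0 \<le> f \<omega> \<and> f \<omega> \<le> 1" and cmp: "compc A \<Omega> D \<kappa> f"
    and dnz: "\<exists>\<omega>\<in>\<Omega>. d \<omega> \<noteq> 0" and dfr: "\<forall>\<omega>\<in>\<Omega>. d \<omega> \<noteq> 0 \<longrightarrow> 0 < f \<omega> \<and> f \<omega> < 1"
    and dt: "\<forall>W. W \<subseteq> \<Omega> \<longrightarrow> sum f W = capc A D \<kappa> W \<longrightarrow> sum d W = 0"
    and IH: "\<And>g. (\<forall>\<omega>\<in>\<Omega>. 0 \<le> g \<omega> \<and> g \<omega> \<le> 1) \<Longrightarrow> compc A \<Omega> D \<kappa> g \<Longrightarrow>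
       card (fracs \<Omega> g) < card (fracs \<Omega> f) \<or>
       (card (fracs \<Omega> g) = card (fracs \<Omega> f) \<and> card (nontight A \<Omega> D \<kappa> g) < card (nontight A \<Omega> D \<kappa> f))
       \<Longrightarrow> lott A \<Omega> D \<kappa> g"
  shows "lott A \<Omega> D \<kappa> f"
proof -
  obtain t1 where t1: "t1 > 0" and r1: "\<forall>\<omega>\<in>\<Omega>. 0 \<le> f \<omega> + t1 * d \<omega> \<and> f \<omega> + t1 * d \<omega> \<le> 1"
    and c1: "compc A \<Omega> D \<kappa> (\<lambda>\<omega>. f \<omega> + t1 * d \<omega>)"
    and a1: "fracs \<Omega> (\<lambda>\<omega>. f \<omega> + t1 * d \<omega>) \<subseteq> fracs \<Omega> f"
    and b1: "nontight A \<Omega> D \<kappa> (\<lambda>\<omega>. f \<omega> + t1 * d \<omega>) \<subseteq> nontight A \<Omega> D \<kappa> f"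
    and e1: "fracs \<Omega> (\<lambda>\<omega>. f \<omega> + t1 * d \<omega>) \<noteq> fracs \<Omega> f \<or> nontight A \<Omega> D \<kappa> (\<lambda>\<omega>. f \<omega> + t1 * d \<omega>) \<noteq> nontight A \<Omega> D \<kappa> f"
    using move[OF fin rng cmp dnz dfr dt] by (elim exE conjE)
  have dnz': "\<exists>\<omega>\<in>\<Omega>. - d \<omega> \<noteq> 0" using dnz by simp
  have dfr': "\<forall>\<omega>\<in>\<Omega>. - d \<omega> \<noteq> 0 \<longrightarrow> 0 < f \<omega> \<and> f \<omega> < 1" using dfr by simp
  have dt': "\<forall>W. W \<subseteq> \<Omega> \<longrightarrow> sum f W = capc A D \<kappa> W \<longrightarrow> sum (\<lambda>\<omega>. - d \<omega>) W = 0"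
    using dt by (simp add: sum_negf)
  obtain t2 where t2: "t2 > 0" and r2: "\<forall>\<omega>\<in>\<Omega>. 0 \<le> f \<omega> + t2 * - d \<omega> \<and> f \<omega> + t2 * - d \<omega> \<le> 1"
    and c2: "compc A \<Omega> D \<kappa> (\<lambda>\<omega>. f \<omega> + t2 * - d \<omega>)"
    and a2: "fracs \<Omega> (\<lambda>\<omega>. f \<omega> + t2 * - d \<omega>) \<subseteq> fracs \<Omega> f"
    and b2: "nontight A \<Omega> D \<kappa> (\<lambda>\<omega>. f \<omega> + t2 * - d \<omega>) \<subseteq> nontight A \<Omega> D \<kappa> f"
    and e2: "fracs \<Omega> (\<lambda>\<omega>. f \<omega> + t2 * - d \<omega>) \<noteq> fracs \<Omega> f \<or> nontight A \<Omega> D \<kappa> (\<lambda>\<omega>. f \<omega> + t2 * - d \<omega>) \<noteq> nontight A \<Omega> D \<kappa> f"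
    using move[OF fin rng cmp dnz' dfr' dt'] by (elim exE conjE)
  have L1: "lott A \<Omega> D \<kappa> (\<lambda>\<omega>. f \<omega> + t1 * d \<omega>)"
    by (rule IH[OF r1 c1 lex_dec[OF fin a1 b1 e1]])
  have L2: "lott A \<Omega> D \<kappa> (\<lambda>\<omega>. f \<omega> + t2 * - d \<omega>)"
    by (rule IH[OF r2 c2 lex_dec[OF fin a2 b2 e2]])
  define l where "l = t2 / (t1 + t2)"
  have l0: "0 \<le> l" "l \<le> 1" using t1 t2 by (auto simp: l_def)
  have eq: "(\<lambda>w. l * (f w + t1 * d w) + (1 - l) * (f w + t2 * - d w)) = f"
  proof
    fix w
    have "1 - l = t1 / (t1 + t2)" using t1 t2 by (simp add: l_def field_simps)
    then have "l * (f w + t1 * d w) + (1 - l) * (f w + t2 * - d w)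
        = (t2 * (f w + t1 * d w) + t1 * (f w + t2 * - d w)) / (t1 + t2)"
      by (simp add: l_def add_divide_distrib)
    also have "\<dots> = ((t1 + t2) * f w) / (t1 + t2)" by (simp add: algebra_simps)
    also have "\<dots> = f w" using t1 t2 by simp
    finally show "l * (f w + t1 * d w) + (1 - l) * (f w + t2 * - d w) = f w" .
  qed
  show ?thesis using lott_mix[OF L1 L2 l0] unfolding eq .
qed

lemma compc_del: "compc A \<Omega> D \<kappa> f \<Longrightarrow> compc A (\<Omega> - {\<omega>}) (\<lambda>a. D a - {\<omega>}) \<kappa> f"
  unfolding compc_def
proof (intro allI impI)
  fix W assume c: "\<forall>W\<subseteq>\<Omega>. sum f W \<le> capc A D \<kappa> W" and W: "W \<subseteq> \<Omega> - {\<omega>}"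
  have "\<And>a. (D a - {\<omega>}) \<inter> W = D a \<inter> W" using W by blast
  then have "capc A (\<lambda>a. D a - {\<omega>}) \<kappa> W = capc A D \<kappa> W" unfolding capc_def by simp
  then show "sum f W \<le> capc A (\<lambda>a. D a - {\<omega>}) \<kappa> W" using c W by auto
qed

lemma compc_sub1: "compc A \<Omega> D \<kappa> f \<Longrightarrow> W \<subseteq> \<Omega> \<Longrightarrow> compc A W (\<lambda>a. D a \<inter> W) \<kappa> f"
  unfolding compc_def
proof (intro allI impI)
  fix W' assume c: "\<forall>W\<subseteq>\<Omega>. sum f W \<le> capc A D \<kappa> W" and W: "W \<subseteq> \<Omega>" and W': "W' \<subseteq> W"
  have "\<And>a. (D a \<inter> W) \<inter> W' = D a \<inter> W'" using W' by blast
  then have "capc A (\<lambda>a. D a \<inter> W) \<kappa> W' = capc A D \<kappa> W'" unfolding capc_def by simp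
  then show "sum f W' \<le> capc A (\<lambda>a. D a \<inter> W) \<kappa> W'" using c W W' by auto
qed

lemma capc_union:
  "capc A D \<kappa> (W \<union> W') = capc A D \<kappa> W + capc A (\<lambda>a. if D a \<inter> W = {} then D a else {}) \<kappa> W'"
  unfolding capc_def sum.distrib[symmetric]
  by (rule sum.cong) auto

lemma compc_sub2:
  assumes fin: "finite \<Omega>" and c: "compc A \<Omega> D \<kappa> f" and W: "W \<subseteq> \<Omega>" and tight: "sum f W = capc A D \<kappa> W"
  shows "compc A (\<Omega> - W) (\<lambda>a. if D a \<inter> W = {} then D a else {}) \<kappa> f"
  unfolding compc_def
proof (intro allI impI)
  fix W' assume W': "W' \<subseteq> \<Omega> - W"
  have "sum f (W \<union> W') = sum f W + sum f W'"
    by (rule sum.union_disjoint) (use fin W W' in \<open>auto intro: finite_subset\<close>)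
  moreover have "W \<union> W' \<subseteq> \<Omega>" using W W' by blast
  then have "sum f (W \<union> W') \<le> capc A D \<kappa> (W \<union> W')" using c unfolding compc_def by blast
  ultimately show "sum f W' \<le> capc A (\<lambda>a. if D a \<inter> W = {} then D a else {}) \<kappa> W'"
    using tight capc_union[of A D \<kappa> W W'] by linarith
qed

lemma capc_nat: "capc A D \<kappa> W = real (\<Sum>a\<in>A. if D a \<inter> W \<noteq> {} then \<kappa> a else 0)"
  unfolding capc_def of_nat_sum by (rule sum.cong) auto

lemma capc_nonneg: "0 \<le> capc A D \<kappa> W"
  unfolding capc_def by (rule sum_nonneg) simp

lemma compc_assign:
  assumes finA: "finite A" and fin: "finite \<Omega>" and a0: "a0 \<in> A" and w: "\<omega> \<in> \<Omega>"
    and one: "\<forall>w\<in>\<Omega>. f w = 1" and c: "compc A \<Omega> D \<kappa> f"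
    and nt: "\<forall>W. W \<subseteq> \<Omega> \<longrightarrow> W \<noteq> {} \<longrightarrow> W \<noteq> \<Omega> \<longrightarrow> sum f W \<noteq> capc A D \<kappa> W"
    and k: "1 \<le> \<kappa> a0"
  shows "compc A (\<Omega> - {\<omega>}) (\<lambda>a. D a - {\<omega>}) (\<kappa>(a0 := \<kappa> a0 - 1)) f"
  unfolding compc_def
proof (intro allI impI)
  fix W assume W: "W \<subseteq> \<Omega> - {\<omega>}"
  show "sum f W \<le> capc A (\<lambda>a. D a - {\<omega>}) (\<kappa>(a0 := \<kappa> a0 - 1)) W"
  proof (cases "W = {}")
    case True
    then show ?thesis using capc_nonneg by simp
  next
    case False
    have W\<Omega>: "W \<subseteq> \<Omega>" "W \<noteq> \<Omega>" using W w by auto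
    have le: "sum f W \<le> capc A D \<kappa> W" using c W\<Omega> unfolding compc_def by blast
    have ne: "sum f W \<noteq> capc A D \<kappa> W" using nt W\<Omega> False by blast
    have "sum f W = sum (\<lambda>_. 1) W" by (rule sum.cong) (use one W\<Omega> in auto)
    then have sf: "sum f W = real (card W)" by simp
    obtain n where n: "capc A D \<kappa> W = real n" using capc_nat by blast
    have "card W < n" using le ne sf n by simp
    then have s1: "sum f W + 1 \<le> capc A D \<kappa> W" using sf n by simp
    have "capc A D \<kappa> W \<le> (\<Sum>a\<in>A. (if (D a - {\<omega>}) \<inter> W \<noteq> {} then real ((\<kappa>(a0 := \<kappa> a0 - 1)) a) else 0) + (if a = a0 then 1 else 0))"
      unfolding capc_def
    proof (rule sum_mono)
      fix a assume "a \<in> A"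
      have e: "(D a - {\<omega>}) \<inter> W = D a \<inter> W" using W by blast
      show "(if D a \<inter> W \<noteq> {} then real (\<kappa> a) else 0)
          \<le> (if (D a - {\<omega>}) \<inter> W \<noteq> {} then real ((\<kappa>(a0 := \<kappa> a0 - 1)) a) else 0) + (if a = a0 then 1 else 0)"
        unfolding e using k by (auto simp: of_nat_diff)
    qed
    also have "\<dots> = capc A (\<lambda>a. D a - {\<omega>}) (\<kappa>(a0 := \<kappa> a0 - 1)) W + 1"
      unfolding capc_def sum.distrib using finA a0 by simp
    finally show ?thesis using s1 by linarith
  qed
qed

lemma exists_agent:
  assumes "\<omega> \<in> \<Omega>" "f \<omega> = 1" "compc A \<Omega> D \<kappa> f"
  shows "\<exists>a\<in>A. \<omega> \<in> D a \<and> 1 \<le> \<kappa> a"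
proof (rule ccontr)
  assume no: "\<not> ?thesis"
  have "capc A D \<kappa> {\<omega>} = 0" unfolding capc_def
    by (rule sum.neutral) (use no in auto)
  moreover have "sum f {\<omega>} \<le> capc A D \<kappa> {\<omega>}" using assms(1,3) unfolding compc_def by auto
  ultimately show False using assms(2) by simp
qed

lemma second_frac:
  assumes fin: "finite \<Omega>" and w0: "\<omega>0 \<in> \<Omega>" "0 < f \<omega>0" "f \<omega>0 < 1"
    and rng: "\<forall>\<omega>\<in>\<Omega>. 0 < f \<omega> \<and> f \<omega> \<le> 1" and tight: "sum f \<Omega> = capc A D \<kappa> \<Omega>"
  shows "\<exists>\<omega>1\<in>\<Omega>. \<omega>1 \<noteq> \<omega>0 \<and> 0 < f \<omega>1 \<and> f \<omega>1 < 1"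
proof (rule ccontr)
  assume no: "\<not> ?thesis"
  have one: "\<forall>\<omega>\<in>\<Omega> - {\<omega>0}. f \<omega> = 1" using no rng by force
  have "sum f \<Omega> = f \<omega>0 + sum f (\<Omega> - {\<omega>0})" using fin w0(1) by (rule sum.remove)
  also have "sum f (\<Omega> - {\<omega>0}) = sum (\<lambda>_. 1) (\<Omega> - {\<omega>0})" by (rule sum.cong) (use one in auto)
  also have "\<dots> = real (card (\<Omega> - {\<omega>0}))" by simp
  finally have e: "f \<omega>0 = capc A D \<kappa> \<Omega> - real (card (\<Omega> - {\<omega>0}))" using tight by simp
  obtain n where n: "capc A D \<kappa> \<Omega> = real n" using capc_nat by blast
  define z where "z = int n - int (card (\<Omega> - {\<omega>0}))"
  have "f \<omega>0 = of_int z" using e n unfolding z_def by simp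
  then have "0 < z" "z < 1" using w0 by linarith+
  then show False by simp
qed

definition Rm :: "'a set \<Rightarrow> (('w set \<times> ('a \<Rightarrow> 'w set) \<times> ('a \<Rightarrow> nat) \<times> ('w \<Rightarrow> real)) \<times> ('w set \<times> ('a \<Rightarrow> 'w set) \<times> ('a \<Rightarrow> nat) \<times> ('w \<Rightarrow> real))) set" where
  "Rm A = inv_image (less_than <*lex*> less_than <*lex*> less_than)
     (\<lambda>(\<Omega>, D, \<kappa>, f). (card \<Omega>, card (fracs \<Omega> f), card (nontight A \<Omega> D \<kappa> f)))"

lemma wf_Rm: "wf (Rm A)"
  unfolding Rm_def by (intro wf_inv_image wf_lex_prod wf_less_than)

lemma core_aux:
  fixes A :: "'a set" and x :: "'w set \<times> ('a \<Rightarrow> 'w set) \<times> ('a \<Rightarrow> nat) \<times> ('w \<Rightarrow> real)"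
  assumes finA: "finite A"
  shows "\<forall>\<Omega> D \<kappa> f. x = (\<Omega>, D, \<kappa>, f) \<longrightarrow> finite \<Omega> \<longrightarrow> (\<forall>a\<in>A. D a \<subseteq> \<Omega>) \<longrightarrow>
     (\<forall>\<omega>\<in>\<Omega>. 0 \<le> f \<omega> \<and> f \<omega> \<le> 1) \<longrightarrow> compc A \<Omega> D \<kappa> f \<longrightarrow> lott A \<Omega> D \<kappa> f"
proof (induction x rule: wf_induct_rule[OF wf_Rm[of A], case_names less])
  case (less x)
  show ?case
  proof (intro allI impI)
    fix \<Omega> D \<kappa> f
    assume x: "x = (\<Omega>, D, \<kappa>, f)" and fin: "finite \<Omega>" and Dsub: "\<forall>a\<in>A. D a \<subseteq> \<Omega>"
      and rng: "\<forall>\<omega>\<in>\<Omega>. 0 \<le> f \<omega> \<and> f \<omega> \<le> 1" and cmp: "compc A \<Omega> D \<kappa> f"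
    have IH0: "lott A \<Omega>' D' \<kappa>' f'"
      if "((\<Omega>', D', \<kappa>', f'), (\<Omega>, D, \<kappa>, f)) \<in> Rm A" "finite \<Omega>'" "\<forall>a\<in>A. D' a \<subseteq> \<Omega>'"
         "\<forall>\<omega>\<in>\<Omega>'. 0 \<le> f' \<omega> \<and> f' \<omega> \<le> 1" "compc A \<Omega>' D' \<kappa>' f'" for \<Omega>' D' \<kappa>' f'
    proof -
      have mem: "((\<Omega>', D', \<kappa>', f'), x) \<in> Rm A" using that(1) x by simp
      have H: "finite \<Omega>' \<longrightarrow> (\<forall>a\<in>A. D' a \<subseteq> \<Omega>') \<longrightarrow> (\<forall>\<omega>\<in>\<Omega>'. 0 \<le> f' \<omega> \<and> f' \<omega> \<le> 1) \<longrightarrow>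
          compc A \<Omega>' D' \<kappa>' f' \<longrightarrow> lott A \<Omega>' D' \<kappa>' f'"
        using less[OF mem, THEN spec, THEN spec, THEN spec, THEN spec, THEN mp, OF refl] .
      show ?thesis using H that(2-5) by blast
    qed
    have IHc: "lott A \<Omega>' D' \<kappa>' f'"
      if "card \<Omega>' < card \<Omega>" "finite \<Omega>'" "\<forall>a\<in>A. D' a \<subseteq> \<Omega>'"
         "\<forall>\<omega>\<in>\<Omega>'. 0 \<le> f' \<omega> \<and> f' \<omega> \<le> 1" "compc A \<Omega>' D' \<kappa>' f'" for \<Omega>' :: "'w set" and D' \<kappa>' f'
      using that by (intro IH0[of \<Omega>' D' \<kappa>' f']) (auto simp: Rm_def)
    have IHl: "lott A \<Omega> D \<kappa> g"
      if "\<forall>\<omega>\<in>\<Omega>. 0 \<le> g \<omega> \<and> g \<omega> \<le> 1" "compc A \<Omega> D \<kappa> g"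
         "card (fracs \<Omega> g) < card (fracs \<Omega> f) \<or>
         (card (fracs \<Omega> g) = card (fracs \<Omega> f) \<and> card (nontight A \<Omega> D \<kappa> g) < card (nontight A \<Omega> D \<kappa> f))" for g
      using that fin Dsub by (intro IH0[of \<Omega> D \<kappa> g]) (auto simp: Rm_def)
    show "lott A \<Omega> D \<kappa> f"
    proof (cases "\<Omega> = {}")
      case True
      then show ?thesis using lott_empty by simp
    next
      case ne: False
      show ?thesis
      proof (cases "\<exists>\<omega>\<in>\<Omega>. f \<omega> = 0")
        case True
        then obtain \<omega> where w: "\<omega> \<in> \<Omega>" "f \<omega> = 0" by blast
        have "lott A (\<Omega> - {\<omega>}) (\<lambda>a. D a - {\<omega>}) \<kappa> f"
        proof (rule IHc)
          show "card (\<Omega> - {\<omega>}) < card \<Omega>" using fin w(1) by (rule card_Diff1_less)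
          show "finite (\<Omega> - {\<omega>})" using fin by simp
          show "\<forall>a\<in>A. D a - {\<omega>} \<subseteq> \<Omega> - {\<omega>}" using Dsub by blast
          show "\<forall>\<omega>'\<in>\<Omega> - {\<omega>}. 0 \<le> f \<omega>' \<and> f \<omega>' \<le> 1" using rng by blast
          show "compc A (\<Omega> - {\<omega>}) (\<lambda>a. D a - {\<omega>}) \<kappa> f" using cmp by (rule compc_del)
        qed
        then show ?thesis by (rule lott_zero[of \<omega> \<Omega> f A D \<kappa>, OF w])
      next
        case nz: False
        show ?thesis
        proof (cases "\<exists>W. W \<subseteq> \<Omega> \<and> W \<noteq> {} \<and> W \<noteq> \<Omega> \<and> sum f W = capc A D \<kappa> W")
          case True
          then obtain W where W: "W \<subseteq> \<Omega>" "W \<noteq> {}" "W \<noteq> \<Omega>" "sum f W = capc A D \<kappa> W" by blast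
          have L1: "lott A W (\<lambda>a. D a \<inter> W) \<kappa> f"
          proof (rule IHc)
            have "W \<subset> \<Omega>" using W by blast
            then show "card W < card \<Omega>" by (rule psubset_card_mono[OF fin])
            show "finite W" using W(1) fin by (rule finite_subset)
            show "\<forall>a\<in>A. D a \<inter> W \<subseteq> W" by blast
            show "\<forall>\<omega>'\<in>W. 0 \<le> f \<omega>' \<and> f \<omega>' \<le> 1" using rng W(1) by blast
            show "compc A W (\<lambda>a. D a \<inter> W) \<kappa> f" using cmp W(1) by (rule compc_sub1)
          qed
          have L2: "lott A (\<Omega> - W) (\<lambda>a. if D a \<inter> W = {} then D a else {}) \<kappa> f"
          proof (rule IHc)
            have "\<Omega> - W \<subset> \<Omega>" using W by blast
            then show "card (\<Omega> - W) < card \<Omega>" by (rule psubset_card_mono[OF fin])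
            show "\<forall>a\<in>A. (if D a \<inter> W = {} then D a else {}) \<subseteq> \<Omega> - W" using Dsub by auto
            show "finite (\<Omega> - W)" using fin by simp
            show "\<forall>\<omega>'\<in>\<Omega> - W. 0 \<le> f \<omega>' \<and> f \<omega>' \<le> 1" using rng by blast
            show "compc A (\<Omega> - W) (\<lambda>a. if D a \<inter> W = {} then D a else {}) \<kappa> f"
              by (rule compc_sub2[OF fin cmp W(1) W(4)])
          qed
          show ?thesis by (rule lott_split[OF W(1) Dsub L1 L2])
        next
          case nt: False
          show ?thesis
          proof (cases "\<forall>\<omega>\<in>\<Omega>. f \<omega> = 1")
            case True
            obtain \<omega> where w: "\<omega> \<in> \<Omega>" using ne by blast
            obtain a0 where a0: "a0 \<in> A" "\<omega> \<in> D a0" "1 \<le> \<kappa> a0"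
              using exists_agent[OF w _ cmp] True w by blast
            have "lott A (\<Omega> - {\<omega>}) (\<lambda>a. D a - {\<omega>}) (\<kappa>(a0 := \<kappa> a0 - 1)) f"
            proof (rule IHc)
              show "card (\<Omega> - {\<omega>}) < card \<Omega>" using fin w by (rule card_Diff1_less)
              show "finite (\<Omega> - {\<omega>})" using fin by simp
              show "\<forall>a\<in>A. D a - {\<omega>} \<subseteq> \<Omega> - {\<omega>}" using Dsub by blast
              show "\<forall>\<omega>'\<in>\<Omega> - {\<omega>}. 0 \<le> f \<omega>' \<and> f \<omega>' \<le> 1" using rng by blast
              show "compc A (\<Omega> - {\<omega>}) (\<lambda>a. D a - {\<omega>}) (\<kappa>(a0 := \<kappa> a0 - 1)) f"
                by (rule compc_assign[OF finA fin a0(1) w True cmp _ a0(3)]) (use nt in blast)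
            qed
            moreover have "f \<omega> = 1" using True w by blast
            ultimately show ?thesis using lott_assign[of \<omega> \<Omega> a0 A D \<kappa> f, OF w a0 _ fin Dsub] by blast
          next
            case notall: False
            then obtain \<omega>0 where w0: "\<omega>0 \<in> \<Omega>" "0 < f \<omega>0" "f \<omega>0 < 1"
              using rng nz by force
            have pos: "\<forall>\<omega>\<in>\<Omega>. 0 < f \<omega> \<and> f \<omega> \<le> 1" using rng nz by force
            have tightW: "W = {} \<or> W = \<Omega>" if "W \<subseteq> \<Omega>" "sum f W = capc A D \<kappa> W" for W
              using nt that by blast
            show ?thesis
            proof (cases "sum f \<Omega> = capc A D \<kappa> \<Omega>")
              case False
              define d :: "'w \<Rightarrow> real" where "d = (\<lambda>\<omega>. if \<omega> = \<omega>0 then 1 else 0)"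
              show ?thesis
              proof (rule lott_move[OF fin rng cmp, of d])
                show "\<exists>\<omega>\<in>\<Omega>. d \<omega> \<noteq> 0" using w0 by (auto simp: d_def)
                show "\<forall>\<omega>\<in>\<Omega>. d \<omega> \<noteq> 0 \<longrightarrow> 0 < f \<omega> \<and> f \<omega> < 1" using w0 by (auto simp: d_def)
                show "\<forall>W. W \<subseteq> \<Omega> \<longrightarrow> sum f W = capc A D \<kappa> W \<longrightarrow> sum d W = 0"
                proof (intro allI impI)
                  fix W assume "W \<subseteq> \<Omega>" "sum f W = capc A D \<kappa> W"
                  then have "W = {}" using tightW False by blast
                  then show "sum d W = 0" by simp
                qed
              qed (rule IHl)
            next
              case True
              obtain \<omega>1 where w1: "\<omega>1 \<in> \<Omega>" "\<omega>1 \<noteq> \<omega>0" "0 < f \<omega>1" "f \<omega>1 < 1"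
                using second_frac[OF fin w0 pos True] by blast
              define d :: "'w \<Rightarrow> real" where "d = (\<lambda>\<omega>. (if \<omega> = \<omega>0 then 1 else 0) - (if \<omega> = \<omega>1 then 1 else 0))"
              have dO: "sum d \<Omega> = 0"
                unfolding d_def sum_subtractf using fin w0(1) w1(1) by simp
              show ?thesis
              proof (rule lott_move[OF fin rng cmp, of d])
                show "\<exists>\<omega>\<in>\<Omega>. d \<omega> \<noteq> 0" using w0 w1 by (auto simp: d_def)
                show "\<forall>\<omega>\<in>\<Omega>. d \<omega> \<noteq> 0 \<longrightarrow> 0 < f \<omega> \<and> f \<omega> < 1" using w0 w1 by (auto simp: d_def)
                show "\<forall>W. W \<subseteq> \<Omega> \<longrightarrow> sum f W = capc A D \<kappa> W \<longrightarrow> sum d W = 0"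
                proof (intro allI impI)
                  fix W assume "W \<subseteq> \<Omega>" "sum f W = capc A D \<kappa> W"
                  then have "W = {} \<or> W = \<Omega>" using tightW by blast
                  then show "sum d W = 0" using dO by auto
                qed
              qed (rule IHl)
            qed
          qed
        qed
      qed
    qed
  qed
qed

lemma core:
  assumes "finite A" "finite \<Omega>" "\<forall>a\<in>A. D a \<subseteq> \<Omega>" "\<forall>\<omega>\<in>\<Omega>. 0 \<le> f \<omega> \<and> f \<omega> \<le> 1" "compc A \<Omega> D \<kappa> f"
  shows "lott A \<Omega> D \<kappa> f"
  using core_aux[OF assms(1), of "(\<Omega>, D, \<kappa>, f)"] assms(2-5) by blast

lemma cell_eq:
  assumes "partition_on \<Omega> (P i)" "c \<in> P i" "\<omega> \<in> c"
  shows "cell P i \<omega> = c"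
  unfolding cell_def
proof (rule the_equality)
  show "c \<in> P i \<and> \<omega> \<in> c" using assms by blast
next
  fix c' assume c': "c' \<in> P i \<and> \<omega> \<in> c'"
  have "disjoint (P i)" using assms(1) unfolding partition_on_def by blast
  then show "c' = c" using c' assms(2,3) by (meson disjointD disjoint_iff)
qed

lemma cell_in:
  assumes "partition_on \<Omega> (P i)" "\<omega> \<in> \<Omega>"
  shows "cell P i \<omega> \<in> P i \<and> \<omega> \<in> cell P i \<omega>"
proof -
  have "\<Union>(P i) = \<Omega>" using assms(1) unfolding partition_on_def by blast
  then obtain c where c: "c \<in> P i" "\<omega> \<in> c" using assms(2) by blast
  then show ?thesis using cell_eq[of \<Omega> P i c \<omega>, OF assms(1) c] by simp
qed

lemma searchers_ge1:
  assumes "finite N"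
  shows "1 \<le> searchers N P s \<omega> \<longleftrightarrow> (\<exists>i\<in>N. \<omega> \<in> s i (cell P i \<omega>))"
proof
  assume "1 \<le> searchers N P s \<omega>"
  then have "searchers N P s \<omega> \<noteq> 0" by simp
  show "\<exists>i\<in>N. \<omega> \<in> s i (cell P i \<omega>)"
  proof (rule ccontr)
    assume "\<not> (\<exists>i\<in>N. \<omega> \<in> s i (cell P i \<omega>))"
    then have "\<forall>i\<in>N. (if \<omega> \<in> s i (cell P i \<omega>) then 1 else 0 :: nat) = 0" by auto
    then have "searchers N P s \<omega> = 0" unfolding searchers_def by (rule sum.neutral)
    then show False using \<open>searchers N P s \<omega> \<noteq> 0\<close> by simp
  qed
next
  assume "\<exists>i\<in>N. \<omega> \<in> s i (cell P i \<omega>)"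
  then obtain i where i: "i \<in> N" "\<omega> \<in> s i (cell P i \<omega>)" by blast
  have "(if \<omega> \<in> s i (cell P i \<omega>) then 1 else 0 :: nat) \<le> searchers N P s \<omega>"
    unfolding searchers_def by (rule member_le_sum) (use i assms in auto)
  then show "1 \<le> searchers N P s \<omega>" using i by simp
qed

lemma sum_prob_le:
  fixes \<sigma> :: "'s pmf" and X :: "'s \<Rightarrow> 'w set"
  assumes fc: "finite c" and bd: "\<forall>s\<in>set_pmf \<sigma>. card (X s \<inter> c) \<le> K"
  shows "(\<Sum>\<omega>\<in>c. measure_pmf.prob \<sigma> {s. \<omega> \<in> X s}) \<le> real K"
proof -
  have int: "integrable (measure_pmf \<sigma>) (\<lambda>s. indicator {s. \<omega> \<in> X s} s :: real)" for \<omega>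
    by (rule measure_pmf.integrable_const_bound[where B=1]) (auto simp: indicator_def)
  have "(\<Sum>\<omega>\<in>c. measure_pmf.prob \<sigma> {s. \<omega> \<in> X s}) = (\<Sum>\<omega>\<in>c. \<integral>s. indicator {s. \<omega> \<in> X s} s \<partial>\<sigma>)"
    by simp
  also have "\<dots> = (\<integral>s. (\<Sum>\<omega>\<in>c. indicator {s. \<omega> \<in> X s} s) \<partial>\<sigma>)"
    by (rule Bochner_Integration.integral_sum[symmetric]) (rule int)
  also have "\<dots> \<le> real K"
  proof (rule measure_pmf.integral_le_const)
    show "integrable (measure_pmf \<sigma>) (\<lambda>s. \<Sum>\<omega>\<in>c. indicator {s. \<omega> \<in> X s} s :: real)"
      by (rule Bochner_Integration.integrable_sum) (rule int)
    show "AE s in measure_pmf \<sigma>. (\<Sum>\<omega>\<in>c. indicator {s. \<omega> \<in> X s} s :: real) \<le> real K"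
    proof (rule AE_pmfI)
      fix s assume s: "s \<in> set_pmf \<sigma>"
      have "(\<Sum>\<omega>\<in>c. indicator {s. \<omega> \<in> X s} s :: real) = (\<Sum>\<omega>\<in>c. if \<omega> \<in> X s then 1 else 0)"
        by (rule sum.cong) (auto simp: indicator_def)
      also have "\<dots> = (\<Sum>\<omega>\<in>{\<omega>\<in>c. \<omega> \<in> X s}. 1)" using sum.inter_filter[OF fc, of "\<lambda>_. 1::real" "\<lambda>\<omega>. \<omega> \<in> X s"] by simp
      also have "{\<omega>\<in>c. \<omega> \<in> X s} = c \<inter> X s" by auto
      also have "(\<Sum>\<omega>\<in>c \<inter> X s. 1) = real (card (c \<inter> X s))" by simp
      also have "\<dots> \<le> real K" using bd s by (simp add: Int_commute)
      finally show "(\<Sum>\<omega>\<in>c. indicator {s. \<omega> \<in> X s} s :: real) \<le> real K" .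
    qed
  qed
  finally show ?thesis .
qed

lemma finP:
  assumes "partition_on \<Omega> Q" "finite \<Omega>"
  shows "finite Q"
proof -
  have "\<Union>Q = \<Omega>" using assms(1) unfolding partition_on_def by blast
  then have "Q \<subseteq> Pow \<Omega>" by blast
  then show ?thesis using assms(2) by (meson finite_Pow_iff finite_subset)
qed

lemma cellsub:
  assumes "partition_on \<Omega> Q" "c \<in> Q"
  shows "c \<subseteq> \<Omega>"
proof -
  have "\<Union>Q = \<Omega>" using assms(1) unfolding partition_on_def by blast
  then show ?thesis using assms(2) by blast
qed

lemma cap_eq:
  assumes finN: "finite N" and finO: "finite \<Omega>" and part: "\<And>i. i \<in> N \<Longrightarrow> partition_on \<Omega> (P i)"
  shows "capc (Sigma N P) snd (\<lambda>p. K (fst p)) W = (\<Sum>i\<in>N. real (K i) * real (card {c\<in>P i. c \<inter> W \<noteq> {}}))"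
proof -
  have fP: "\<forall>i\<in>N. finite (P i)"
  proof
    fix i assume "i \<in> N"
    show "finite (P i)" using finP[OF part[OF \<open>i \<in> N\<close>] finO] .
  qed
  have "capc (Sigma N P) snd (\<lambda>p. K (fst p)) W = (\<Sum>(i, c)\<in>Sigma N P. if c \<inter> W \<noteq> {} then real (K i) else 0)"
    unfolding capc_def case_prod_beta by (rule refl)
  also have "\<dots> = (\<Sum>i\<in>N. \<Sum>c\<in>P i. if c \<inter> W \<noteq> {} then real (K i) else 0)"
    by (rule sum.Sigma[symmetric]) (use finN fP in auto)
  also have "\<dots> = (\<Sum>i\<in>N. real (K i) * real (card {c\<in>P i. c \<inter> W \<noteq> {}}))"
  proof (rule sum.cong[OF refl])
    fix i assume i: "i \<in> N"
    have "(\<Sum>c\<in>P i. if c \<inter> W \<noteq> {} then real (K i) else 0) = (\<Sum>c\<in>{c\<in>P i. c \<inter> W \<noteq> {}}. real (K i))"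
      using sum.inter_filter[of "P i" "\<lambda>_. real (K i)" "\<lambda>c. c \<inter> W \<noteq> {}"] fP i by simp
    also have "\<dots> = real (K i) * real (card {c\<in>P i. c \<inter> W \<noteq> {}})" by simp
    finally show "(\<Sum>c\<in>P i. if c \<inter> W \<noteq> {} then real (K i) else 0) = real (K i) * real (card {c\<in>P i. c \<inter> W \<noteq> {}})" .
  qed
  finally show ?thesis .
qed

lemma comp_lot:
  assumes finN: "finite N" and finO: "finite \<Omega>" and part: "\<And>i. i \<in> N \<Longrightarrow> partition_on \<Omega> (P i)"
    and rng: "\<And>\<omega>. \<omega> \<in> \<Omega> \<Longrightarrow> 0 \<le> f \<omega> \<and> f \<omega> \<le> 1"
    and cmp: "compatible N \<Omega> P K f"
  shows "induced_by_lottery N \<Omega> P K f"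
proof -
  have finA: "finite (Sigma N P)"
  proof (rule finite_SigmaI[OF finN])
    fix i assume "i \<in> N"
    show "finite (P i)" using finP[OF part[OF \<open>i \<in> N\<close>] finO] .
  qed
  have Dsub: "\<forall>p\<in>Sigma N P. snd p \<subseteq> \<Omega>"
  proof
    fix p assume "p \<in> Sigma N P"
    then show "snd p \<subseteq> \<Omega>" using cellsub[OF part] by (cases p) auto
  qed
  have cc: "compc (Sigma N P) \<Omega> snd (\<lambda>p. K (fst p)) f"
    unfolding compc_def
  proof (intro allI impI)
    fix W assume "W \<subseteq> \<Omega>"
    then have "sum f W \<le> (\<Sum>i\<in>N. real (K i) * real (card {c\<in>P i. c \<inter> W \<noteq> {}}))"
      using cmp unfolding compatible_def by blast
    then show "sum f W \<le> capc (Sigma N P) snd (\<lambda>p. K (fst p)) W"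
      using cap_eq[OF finN finO part, where W=W and K=K] by simp
  qed
  have rng': "\<forall>\<omega>\<in>\<Omega>. 0 \<le> f \<omega> \<and> f \<omega> \<le> 1" using rng by blast
  obtain \<tau> where t1: "\<forall>S\<in>set_pmf \<tau>. coverable (Sigma N P) snd (\<lambda>p. K (fst p)) S \<and> S \<subseteq> \<Omega>"
    and t2: "\<forall>\<omega>\<in>\<Omega>. f \<omega> = measure_pmf.prob \<tau> {S. \<omega> \<in> S}"
    using core[OF finA finO Dsub rng' cc] unfolding lott_def by (elim exE conjE)
  define good where "good S s \<longleftrightarrow> pure_profile N P K s \<and> (\<forall>\<omega>\<in>\<Omega>. 1 \<le> searchers N P s \<omega> \<longleftrightarrow> \<omega> \<in> S)" for S s
  have ex: "\<exists>s. good S s" if S: "S \<in> set_pmf \<tau>" for S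
  proof -
    have cov: "coverable (Sigma N P) snd (\<lambda>p. K (fst p)) S" and SO: "S \<subseteq> \<Omega>" using t1 S by auto
    obtain x where x1: "\<forall>p\<in>Sigma N P. x p \<subseteq> snd p \<and> card (x p) \<le> K (fst p)"
      and x2: "S \<subseteq> (\<Union>p\<in>Sigma N P. x p)" using cov unfolding coverable_def by (elim exE conjE)
    define s where "s = (\<lambda>i c. if i \<in> N \<and> c \<in> P i then x (i, c) \<inter> S else {})"
    have ps: "\<forall>i\<in>N. \<forall>c\<in>P i. s i c \<subseteq> c \<and> card (s i c) \<le> K i"
    proof (intro ballI)
      fix i c assume i: "i \<in> N" and c: "c \<in> P i"
      have xc: "x (i, c) \<subseteq> c" "card (x (i, c)) \<le> K i" using x1 i c by auto
      have "finite c" using cellsub[OF part[OF i] c] finO by (rule finite_subset)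
      then have "finite (x (i, c))" using xc(1) by (rule finite_subset[rotated])
      then have "card (x (i, c) \<inter> S) \<le> card (x (i, c))" by (simp add: card_mono)
      then show "s i c \<subseteq> c \<and> card (s i c) \<le> K i" using xc i c by (auto simp: s_def)
    qed
    have p2: "\<forall>i. i \<notin> N \<longrightarrow> s i = (\<lambda>_. {})" by (auto simp: s_def)
    have p3: "\<forall>i\<in>N. \<forall>c. c \<notin> P i \<longrightarrow> s i c = {}" by (simp add: s_def)
    have pure: "pure_profile N P K s"
      unfolding pure_profile_def pure_strategy_def using ps p2 p3 by blast
    have "1 \<le> searchers N P s \<omega> \<longleftrightarrow> \<omega> \<in> S" if w: "\<omega> \<in> \<Omega>" for \<omega>
    proof -
      have "(\<exists>i\<in>N. \<omega> \<in> s i (cell P i \<omega>)) \<longleftrightarrow> \<omega> \<in> S"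
      proof
        assume "\<exists>i\<in>N. \<omega> \<in> s i (cell P i \<omega>)"
        then show "\<omega> \<in> S" by (auto simp: s_def split: if_splits)
      next
        assume wS: "\<omega> \<in> S"
        then obtain p where p: "p \<in> Sigma N P" "\<omega> \<in> x p" using x2 by blast
        obtain i c where ic: "p = (i, c)" by (cases p)
        have i: "i \<in> N" and c: "c \<in> P i" using p(1) ic by auto
        have "\<omega> \<in> c" using x1 p ic by auto
        then have "cell P i \<omega> = c" using cell_eq[of \<Omega> P i c \<omega>, OF part[OF i] c] by simp
        then have "\<omega> \<in> s i (cell P i \<omega>)" using i c p ic wS by (simp add: s_def)
        then show "\<exists>i\<in>N. \<omega> \<in> s i (cell P i \<omega>)" using i by blast
      qed
      then show ?thesis using searchers_ge1[OF finN, of P s \<omega>] by (rule trans[rotated])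
    qed
    then have "good S s" using pure unfolding good_def by blast
    then show ?thesis by blast
  qed
  define prof where "prof S = (SOME s. good S s)" for S
  have gp: "good S (prof S)" if "S \<in> set_pmf \<tau>" for S
    unfolding prof_def using ex[OF that] by (rule someI_ex)
  show ?thesis unfolding induced_by_lottery_def
  proof (intro exI[of _ "map_pmf prof \<tau>"] conjI)
    show "set_pmf (map_pmf prof \<tau>) \<subseteq> {s. pure_profile N P K s}"
      using gp unfolding good_def by auto
    show "\<forall>\<omega>\<in>\<Omega>. f \<omega> = measure_pmf.prob (map_pmf prof \<tau>) {s. 1 \<le> searchers N P s \<omega>}"
    proof
      fix \<omega> assume w: "\<omega> \<in> \<Omega>"
      have "measure_pmf.prob (map_pmf prof \<tau>) {s. 1 \<le> searchers N P s \<omega>}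
          = measure_pmf.prob \<tau> (prof -` {s. 1 \<le> searchers N P s \<omega>})" by simp
      also have "\<dots> = measure_pmf.prob \<tau> {S. \<omega> \<in> S}"
        by (rule measure_pmf_cong_support) (use gp w in \<open>auto simp: good_def\<close>)
      finally show "f \<omega> = measure_pmf.prob (map_pmf prof \<tau>) {s. 1 \<le> searchers N P s \<omega>}"
        using t2 w by simp
    qed
  qed
qed

lemma lot_frac:
  fixes N :: "'i set" and \<Omega> :: "'w set" and P :: "'i \<Rightarrow> 'w set set"
  assumes finN: "finite N" and finO: "finite \<Omega>" and part: "\<And>i. i \<in> N \<Longrightarrow> partition_on \<Omega> (P i)"
    and lot: "induced_by_lottery N \<Omega> P K f"
  shows "\<exists>\<alpha>. fractional_allocation N P K \<alpha> \<and> (\<forall>\<omega>\<in>\<Omega>. f \<omega> = generated_outcome N P \<alpha> \<omega>)"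
proof -
  obtain \<sigma> where supp: "set_pmf \<sigma> \<subseteq> {s. pure_profile N P K s}"
    and fe: "\<forall>\<omega>\<in>\<Omega>. f \<omega> = measure_pmf.prob \<sigma> {s. searchers N P s \<omega> \<ge> 1}"
    using lot unfolding induced_by_lottery_def by (elim exE conjE)
  define ch where "ch s \<omega> = (SOME i. i \<in> N \<and> \<omega> \<in> s i (cell P i \<omega>))" for s :: "'i \<Rightarrow> 'w set \<Rightarrow> 'w set" and \<omega>
  define E where "E i \<omega> = {s. (\<exists>j\<in>N. \<omega> \<in> s j (cell P j \<omega>)) \<and> ch s \<omega> = i}" for i \<omega>
  define \<alpha> where "\<alpha> i (c :: 'w set) \<omega> = measure_pmf.prob \<sigma> (E i \<omega>)" for i c \<omega>
  have chp: "ch s \<omega> \<in> N \<and> \<omega> \<in> s (ch s \<omega>) (cell P (ch s \<omega>) \<omega>)" if "\<exists>j\<in>N. \<omega> \<in> s j (cell P j \<omega>)" for s \<omega>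
    unfolding ch_def by (rule someI_ex) (use that in blast)
  have fa: "fractional_allocation N P K \<alpha>"
    unfolding fractional_allocation_def
  proof (intro ballI conjI)
    fix i c \<omega> assume "i \<in> N" "c \<in> P i" "\<omega> \<in> c"
    show "\<alpha> i c \<omega> \<ge> 0" unfolding \<alpha>_def by simp
  next
    fix i c assume i: "i \<in> N" and c: "c \<in> P i"
    have fc: "finite c" using cellsub[OF part[OF i] c] finO by (rule finite_subset)
    have "(\<Sum>\<omega>\<in>c. \<alpha> i c \<omega>) \<le> (\<Sum>\<omega>\<in>c. measure_pmf.prob \<sigma> {s. \<omega> \<in> s i c})"
    proof (rule sum_mono)
      fix \<omega> assume w: "\<omega> \<in> c"
      have ce: "cell P i \<omega> = c" using cell_eq[of \<Omega> P i c \<omega>, OF part[OF i] c w] .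
      have "E i \<omega> \<subseteq> {s. \<omega> \<in> s i c}"
      proof
        fix s assume "s \<in> E i \<omega>"
        then have h: "\<exists>j\<in>N. \<omega> \<in> s j (cell P j \<omega>)" "ch s \<omega> = i" unfolding E_def by auto
        have "\<omega> \<in> s (ch s \<omega>) (cell P (ch s \<omega>) \<omega>)" using chp[of \<omega> s, OF h(1)] by blast
        then show "s \<in> {s. \<omega> \<in> s i c}" using h(2) ce by simp
      qed
      then show "\<alpha> i c \<omega> \<le> measure_pmf.prob \<sigma> {s. \<omega> \<in> s i c}"
        unfolding \<alpha>_def by (rule measure_pmf.finite_measure_mono) simp
    qed
    also have "\<dots> \<le> real (K i)"
    proof (rule sum_prob_le[OF fc])
      show "\<forall>s\<in>set_pmf \<sigma>. card (s i c \<inter> c) \<le> K i"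
      proof
        fix s assume "s \<in> set_pmf \<sigma>"
        then have "pure_profile N P K s" using supp by blast
        then have "s i c \<subseteq> c" "card (s i c) \<le> K i"
          using i c unfolding pure_profile_def pure_strategy_def by auto
        then show "card (s i c \<inter> c) \<le> K i" by (simp add: Int_absorb2)
      qed
    qed
    finally show "(\<Sum>\<omega>\<in>c. \<alpha> i c \<omega>) \<le> real (K i)" .
  qed
  have gen: "f \<omega> = generated_outcome N P \<alpha> \<omega>" if w: "\<omega> \<in> \<Omega>" for \<omega>
  proof -
    have "(\<Sum>i\<in>N. \<alpha> i (cell P i \<omega>) \<omega>) = (\<Sum>i\<in>N. measure_pmf.prob \<sigma> (E i \<omega>))"
      unfolding \<alpha>_def by (rule refl)
    also have "\<dots> = measure_pmf.prob \<sigma> (\<Union>i\<in>N. E i \<omega>)"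
    proof (rule measure_pmf.finite_measure_finite_Union[symmetric])
      show "finite N" by (rule finN)
      show "(\<lambda>i. E i \<omega>) ` N \<subseteq> measure_pmf.events \<sigma>" by simp
      show "disjoint_family_on (\<lambda>i. E i \<omega>) N"
        unfolding disjoint_family_on_def
      proof (intro ballI impI)
        fix m n :: 'i assume "m \<noteq> n"
        then show "E m \<omega> \<inter> E n \<omega> = {}" unfolding E_def by blast
      qed
    qed
    also have "(\<Union>i\<in>N. E i \<omega>) = {s. searchers N P s \<omega> \<ge> 1}"
    proof
      show "(\<Union>i\<in>N. E i \<omega>) \<subseteq> {s. searchers N P s \<omega> \<ge> 1}"
      proof
        fix s assume "s \<in> (\<Union>i\<in>N. E i \<omega>)"
        then have "\<exists>j\<in>N. \<omega> \<in> s j (cell P j \<omega>)" unfolding E_def by blast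
        then have "searchers N P s \<omega> \<ge> 1" using searchers_ge1[OF finN, of P s \<omega>] by (rule iffD2[rotated])
        then show "s \<in> {s. searchers N P s \<omega> \<ge> 1}" by simp
      qed
      show "{s. searchers N P s \<omega> \<ge> 1} \<subseteq> (\<Union>i\<in>N. E i \<omega>)"
      proof
        fix s assume "s \<in> {s. searchers N P s \<omega> \<ge> 1}"
        then have "searchers N P s \<omega> \<ge> 1" by simp
        then have h: "\<exists>j\<in>N. \<omega> \<in> s j (cell P j \<omega>)" using searchers_ge1[OF finN, of P s \<omega>] by (rule iffD1[rotated])
        then have "ch s \<omega> \<in> N" using chp[of \<omega> s] by blast
        moreover have "s \<in> E (ch s \<omega>) \<omega>" unfolding E_def using h by blast
        ultimately show "s \<in> (\<Union>i\<in>N. E i \<omega>)" by blast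
      qed
    qed
    finally have e: "(\<Sum>i\<in>N. \<alpha> i (cell P i \<omega>) \<omega>) = f \<omega>" using fe w by simp
    have "f \<omega> \<le> 1" using fe w by simp
    then show ?thesis unfolding generated_outcome_def e by simp
  qed
  show ?thesis using fa gen by blast
qed

lemma frac_comp:
  assumes finN: "finite N" and finO: "finite \<Omega>" and part: "\<And>i. i \<in> N \<Longrightarrow> partition_on \<Omega> (P i)"
    and fa: "fractional_allocation N P K \<alpha>" and gen: "\<forall>\<omega>\<in>\<Omega>. f \<omega> = generated_outcome N P \<alpha> \<omega>"
  shows "compatible N \<Omega> P K f"
  unfolding compatible_def
proof (intro allI impI)
  fix W assume W: "W \<subseteq> \<Omega>"
  have finW: "finite W" using W finO by (rule finite_subset)
  have "sum f W \<le> (\<Sum>\<omega>\<in>W. \<Sum>i\<in>N. \<alpha> i (cell P i \<omega>) \<omega>)"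
  proof (rule sum_mono)
    fix \<omega> assume "\<omega> \<in> W"
    then have "f \<omega> = min 1 (\<Sum>i\<in>N. \<alpha> i (cell P i \<omega>) \<omega>)" using gen W unfolding generated_outcome_def by auto
    then show "f \<omega> \<le> (\<Sum>i\<in>N. \<alpha> i (cell P i \<omega>) \<omega>)" by simp
  qed
  also have "\<dots> = (\<Sum>i\<in>N. \<Sum>\<omega>\<in>W. \<alpha> i (cell P i \<omega>) \<omega>)" by (rule sum.swap)
  also have "\<dots> \<le> (\<Sum>i\<in>N. real (K i) * real (card {c\<in>P i. c \<inter> W \<noteq> {}}))"
  proof (rule sum_mono)
    fix i assume i: "i \<in> N"
    define C where "C = {c\<in>P i. c \<inter> W \<noteq> {}}"
    have finC: "finite C" using finP[OF part[OF i] finO] unfolding C_def by simp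
    have img: "(\<lambda>\<omega>. cell P i \<omega>) ` W \<subseteq> C"
    proof
      fix c assume "c \<in> (\<lambda>\<omega>. cell P i \<omega>) ` W"
      then obtain \<omega> where "\<omega> \<in> W" "c = cell P i \<omega>" by blast
      then show "c \<in> C" using cell_in[of \<Omega> P i \<omega>, OF part[OF i]] W unfolding C_def by blast
    qed
    have "(\<Sum>\<omega>\<in>W. \<alpha> i (cell P i \<omega>) \<omega>) = (\<Sum>c\<in>C. \<Sum>\<omega>\<in>{\<omega>\<in>W. cell P i \<omega> = c}. \<alpha> i (cell P i \<omega>) \<omega>)"
      by (rule sum.group[symmetric, OF finW finC img])
    also have "\<dots> \<le> (\<Sum>c\<in>C. real (K i))"
    proof (rule sum_mono)
      fix c assume c: "c \<in> C"
      then have cP: "c \<in> P i" unfolding C_def by blast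
      have fc: "finite c" using cellsub[OF part[OF i] cP] finO by (rule finite_subset)
      have set: "{\<omega>\<in>W. cell P i \<omega> = c} = c \<inter> W"
      proof
        show "{\<omega>\<in>W. cell P i \<omega> = c} \<subseteq> c \<inter> W" using cell_in[of \<Omega> P i, OF part[OF i]] W by blast
        show "c \<inter> W \<subseteq> {\<omega>\<in>W. cell P i \<omega> = c}" using cell_eq[of \<Omega> P i c, OF part[OF i] cP] by blast
      qed
      have "(\<Sum>\<omega>\<in>{\<omega>\<in>W. cell P i \<omega> = c}. \<alpha> i (cell P i \<omega>) \<omega>) = (\<Sum>\<omega>\<in>c \<inter> W. \<alpha> i c \<omega>)"
        unfolding set by (rule sum.cong) (use cell_eq[of \<Omega> P i c, OF part[OF i] cP] in auto)
      also have "\<dots> \<le> (\<Sum>\<omega>\<in>c. \<alpha> i c \<omega>)"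
        by (rule sum_mono2[OF fc]) (use fa i cP in \<open>auto simp: fractional_allocation_def\<close>)
      also have "\<dots> \<le> real (K i)" using fa i cP unfolding fractional_allocation_def by blast
      finally show "(\<Sum>\<omega>\<in>{\<omega>\<in>W. cell P i \<omega> = c}. \<alpha> i (cell P i \<omega>) \<omega>) \<le> real (K i)" .
    qed
    also have "\<dots> = real (K i) * real (card C)" by simp
    finally show "(\<Sum>\<omega>\<in>W. \<alpha> i (cell P i \<omega>) \<omega>) \<le> real (K i) * real (card {c\<in>P i. c \<inter> W \<noteq> {}})"
      unfolding C_def .
  qed
  finally show "(\<Sum>\<omega>\<in>W. f \<omega>) \<le> (\<Sum>i\<in>N. real (K i) * real (card {c\<in>P i. c \<inter> W \<noteq> {}}))" .
qed

theorem proposition2: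
  fixes N :: "'i set" and \<Omega> :: "'w set" and P :: "'i \<Rightarrow> 'w set set" and K :: "'i \<Rightarrow> nat"
    and f :: "'w \<Rightarrow> real"
  assumes "finite N" and "finite \<Omega>"
    and "\<And>i. i \<in> N \<Longrightarrow> partition_on \<Omega> (P i)"
    and "\<And>\<omega>. \<omega> \<in> \<Omega> \<Longrightarrow> 0 \<le> f \<omega> \<and> f \<omega> \<le> 1"
  shows "(induced_by_lottery N \<Omega> P K f \<longleftrightarrow> compatible N \<Omega> P K f)
       \<and> (compatible N \<Omega> P K f \<longleftrightarrow>
            (\<exists>\<alpha>. fractional_allocation N P K \<alpha> \<and> (\<forall>\<omega>\<in>\<Omega>. f \<omega> = generated_outcome N P \<alpha> \<omega>)))"
proof -
  have ci: "compatible N \<Omega> P K f \<Longrightarrow> induced_by_lottery N \<Omega> P K f"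
    by (rule comp_lot[of N \<Omega> P f K, OF assms(1,2,3,4)])
  have ia: "induced_by_lottery N \<Omega> P K f \<Longrightarrow> \<exists>\<alpha>. fractional_allocation N P K \<alpha> \<and> (\<forall>\<omega>\<in>\<Omega>. f \<omega> = generated_outcome N P \<alpha> \<omega>)"
    by (rule lot_frac[of N \<Omega> P K f, OF assms(1,2,3)])
  have ac: "\<exists>\<alpha>. fractional_allocation N P K \<alpha> \<and> (\<forall>\<omega>\<in>\<Omega>. f \<omega> = generated_outcome N P \<alpha> \<omega>) \<Longrightarrow> compatible N \<Omega> P K f"
    using frac_comp[of N \<Omega> P K, OF assms(1,2,3)] by blast
  show ?thesis using ci ia ac by blast
qed

end
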